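(* Let $I$ be an instance of the multicommodity flow feasibility problem: a directed graph $D=(V,A)$, capacities $u\in\mathbb{R}_+^A$, and commodities $K=\{1,\dots,k\}$, commodity $i$ having source $s_i\in V$, sink $t_i\in V$ and demand $d_i\ge0$. Construct the instance $I'$ of the robust path flow problem as follows: add a super source $s$ and super sink $t$; for each $i\in K$ add arcs $a_i=(s,s_i)$ and $z_i=(t_i,t)$ with $u_{a_i}=u_{z_i}=d_i$ and $c_{a_i}=c_{z_i}=i$; add an arc $e^*=(s,t)$ with $u_{e^*}=1$ and $c_{e^*}=k+1$; set $c_e=\infty$ for all $e\in A$ (original arcs keep capacities $u_e$); and set $B_I=\sum_{i\in K}i\,d_i$. Then there is a multicommodity flow in $D$ respecting the capacities $u$ and routing $d_i$ units from $s_i$ to $t_i$ for every $i\in K$ if and only if in $I'$ there is a feasible path flow $x$ with $\min_{z\in\Omega}\mathrm{val}(x,z)=1$.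
   Context: Robust path flow problem on a directed (multi)graph $D'=(V',A')$ with source $s$, sink $t$, capacities $u$, interdiction costs $c_e\in\mathbb{R}_+\cup\{\infty\}$ and interdictor budget $B_I$: $\mathcal{P}$ is the set of $s$-$t$-paths, the flow player picks $x\in X=\{x\in\mathbb{R}_+^{\mathcal{P}}:\sum_{P\ni e}x_P\le u_e\ \forall e\in A'\}$, the interdictor then picks $z\in\Omega=\{z\in\mathbb{R}_+^{A'\times\mathcal{P}}:\sum_{e\in A'}c_e\sum_{P\ni e}z_{e,P}\le B_I\}$ (with cost $\infty$ meaning flow cannot be stolen at that arc, i.e. $z_{e,P}=0$ whenever $c_e=\infty$), and $\mathrm{val}(x,z)=\sum_{P\in\mathcal{P}}(x_P-\sum_{e\in P}z_{e,P})^+$. The flow player's profit from $x$ is $\min_{z\in\Omega}\mathrm{val}(x,z)$. *)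

theory Defs
  imports "HOL-Analysis.Analysis"
begin

definition st_paths :: "'e set \<Rightarrow> ('e \<Rightarrow> 'v) \<Rightarrow> ('e \<Rightarrow> 'v) \<Rightarrow> 'v \<Rightarrow> 'v \<Rightarrow> 'e list set" where
  "st_paths A tailf headf s t =
     {P. P \<noteq> [] \<and> set P \<subseteq> A \<and> tailf (hd P) = s \<and> headf (last P) = t \<and>
         (\<forall>j. Suc j < length P \<longrightarrow> headf (P ! j) = tailf (P ! Suc j)) \<and>
         distinct (tailf (hd P) # map headf P)}"

definition path_flows ::
  "'e set \<Rightarrow> ('e \<Rightarrow> 'v) \<Rightarrow> ('e \<Rightarrow> 'v) \<Rightarrow> 'v \<Rightarrow> 'v \<Rightarrow> ('e \<Rightarrow> real) \<Rightarrow> ('e list \<Rightarrow> real) set" where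
  "path_flows A tailf headf s t u =
     {x. (\<forall>P\<in>st_paths A tailf headf s t. 0 \<le> x P) \<and>
         (\<forall>e\<in>A. (\<Sum>P\<in>{P\<in>st_paths A tailf headf s t. e \<in> set P}. x P) \<le> u e)}"

definition interdictions ::
  "'e set \<Rightarrow> ('e \<Rightarrow> 'v) \<Rightarrow> ('e \<Rightarrow> 'v) \<Rightarrow> 'v \<Rightarrow> 'v \<Rightarrow> ('e \<Rightarrow> ereal) \<Rightarrow> real
     \<Rightarrow> ('e \<Rightarrow> 'e list \<Rightarrow> real) set" where
  "interdictions A tailf headf s t c B =
     {z. (\<forall>e P. 0 \<le> z e P) \<and> (\<forall>e P. c e = \<infinity> \<longrightarrow> z e P = 0) \<and>
         (\<Sum>e\<in>A. real_of_ereal (c e) *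
             (\<Sum>P\<in>{P\<in>st_paths A tailf headf s t. e \<in> set P}. z e P)) \<le> B}"

definition robust_val ::
  "'e set \<Rightarrow> ('e \<Rightarrow> 'v) \<Rightarrow> ('e \<Rightarrow> 'v) \<Rightarrow> 'v \<Rightarrow> 'v \<Rightarrow> ('e list \<Rightarrow> real)
     \<Rightarrow> ('e \<Rightarrow> 'e list \<Rightarrow> real) \<Rightarrow> real" where
  "robust_val A tailf headf s t x z =
     (\<Sum>P\<in>st_paths A tailf headf s t. max 0 (x P - (\<Sum>e\<in>set P. z e P)))"

definition robust_profit ::
  "'e set \<Rightarrow> ('e \<Rightarrow> 'v) \<Rightarrow> ('e \<Rightarrow> 'v) \<Rightarrow> 'v \<Rightarrow> 'v \<Rightarrow> ('e \<Rightarrow> ereal) \<Rightarrow> real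
     \<Rightarrow> ('e list \<Rightarrow> real) \<Rightarrow> real" where
  "robust_profit A tailf headf s t c B x =
     (INF z\<in>interdictions A tailf headf s t c B. robust_val A tailf headf s t x z)"

definition mc_flow_feasible ::
  "'v set \<Rightarrow> 'a set \<Rightarrow> ('a \<Rightarrow> 'v) \<Rightarrow> ('a \<Rightarrow> 'v) \<Rightarrow> ('a \<Rightarrow> real) \<Rightarrow> nat
     \<Rightarrow> (nat \<Rightarrow> 'v) \<Rightarrow> (nat \<Rightarrow> 'v) \<Rightarrow> (nat \<Rightarrow> real) \<Rightarrow> bool" where
  "mc_flow_feasible V A tailf headf u k src snk d \<longleftrightarrow>
     (\<exists>f :: nat \<Rightarrow> 'a \<Rightarrow> real.
        (\<forall>i\<in>{1..k}. \<forall>e\<in>A. 0 \<le> f i e) \<and>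
        (\<forall>e\<in>A. (\<Sum>i=1..k. f i e) \<le> u e) \<and>
        (\<forall>i\<in>{1..k}. \<forall>v\<in>V.
            (\<Sum>e\<in>{e\<in>A. tailf e = v}. f i e) - (\<Sum>e\<in>{e\<in>A. headf e = v}. f i e)
              = (if v = src i then d i else 0) - (if v = snk i then d i else 0)))"

datatype 'v rvert = VOld 'v | VSrc | VSnk
datatype 'a rarc = AOld 'a | AIn nat | AOut nat | AStar

definition red_arcs :: "'a set \<Rightarrow> nat \<Rightarrow> 'a rarc set" where
  "red_arcs A k = AOld ` A \<union> AIn ` {1..k} \<union> AOut ` {1..k} \<union> {AStar}"

fun red_tail :: "('a \<Rightarrow> 'v) \<Rightarrow> (nat \<Rightarrow> 'v) \<Rightarrow> (nat \<Rightarrow> 'v) \<Rightarrow> 'a rarc \<Rightarrow> 'v rvert" where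
  "red_tail tailf src snk (AOld e) = VOld (tailf e)"
| "red_tail tailf src snk (AIn i) = VSrc"
| "red_tail tailf src snk (AOut i) = VOld (snk i)"
| "red_tail tailf src snk AStar = VSrc"

fun red_head :: "('a \<Rightarrow> 'v) \<Rightarrow> (nat \<Rightarrow> 'v) \<Rightarrow> (nat \<Rightarrow> 'v) \<Rightarrow> 'a rarc \<Rightarrow> 'v rvert" where
  "red_head headf src snk (AOld e) = VOld (headf e)"
| "red_head headf src snk (AIn i) = VOld (src i)"
| "red_head headf src snk (AOut i) = VSnk"
| "red_head headf src snk AStar = VSnk"

fun red_cap :: "('a \<Rightarrow> real) \<Rightarrow> (nat \<Rightarrow> real) \<Rightarrow> 'a rarc \<Rightarrow> real" where
  "red_cap u d (AOld e) = u e"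
| "red_cap u d (AIn i) = d i"
| "red_cap u d (AOut i) = d i"
| "red_cap u d AStar = 1"

fun red_cost :: "nat \<Rightarrow> 'a rarc \<Rightarrow> ereal" where
  "red_cost k (AOld e) = \<infinity>"
| "red_cost k (AIn i) = ereal (real i)"
| "red_cost k (AOut i) = ereal (real i)"
| "red_cost k AStar = ereal (real k + 1)"

definition red_budget :: "nat \<Rightarrow> (nat \<Rightarrow> real) \<Rightarrow> real" where
  "red_budget k d = (\<Sum>i=1..k. real i * d i)"

end

theory Submission
  imports Defs
begin

fun walk :: "('e\<Rightarrow>'v) \<Rightarrow> ('e\<Rightarrow>'v) \<Rightarrow> 'e list \<Rightarrow> 'v \<Rightarrow> 'v \<Rightarrow> bool" where
  "walk T H [] s t = (s = t)"
| "walk T H (e#p) s t = (T e = s \<and> walk T H p (H e) t)"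

lemma walk_append: "walk T H (p@q) s t \<longleftrightarrow> (\<exists>m. walk T H p s m \<and> walk T H q m t)"
  by (induction p arbitrary: s) auto

lemma walk_take: "walk T H p s t \<Longrightarrow> a \<le> length p \<Longrightarrow> walk T H (take a p) s ((s # map H p)!a)"
proof (induction p arbitrary: s a)
  case Nil then show ?case by simp
next
  case (Cons e p) then show ?case by (cases a) auto
qed

lemma walk_drop: "walk T H p s t \<Longrightarrow> a \<le> length p \<Longrightarrow> walk T H (drop a p) ((s # map H p)!a) t"
proof (induction p arbitrary: s a)
  case Nil then show ?case by simp
next
  case (Cons e p) then show ?case by (cases a) auto
qed

lemma walk_last: "walk T H p s t \<Longrightarrow> last (s # map H p) = t"
  by (induction p arbitrary: s) auto

lemma walk_simple: "walk T H p s t \<Longrightarrow> \<exists>q. walk T H q s t \<and> set q \<subseteq> set p \<and> distinct (s # map H q)"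
proof (induction "length p" arbitrary: p rule: less_induct)
  case less
  show ?case
  proof (cases "distinct (s # map H p)")
    case True then show ?thesis using less.prems by blast
  next
    case False
    let ?vs = "s # map H p"
    obtain a b where ab: "a < length ?vs" "b < length ?vs" "a \<noteq> b" "?vs!a = ?vs!b"
      using False by (auto simp: distinct_conv_nth)
    obtain a' b' where ab': "a' < b'" "b' \<le> length p" "?vs!a' = ?vs!b'"
    proof (cases "a < b")
      case True then show ?thesis using ab that[of a b] by auto
    next
      case False then show ?thesis using ab that[of b a] by auto
    qed
    define q where "q = take a' p @ drop b' p"
    have "walk T H q s t" unfolding q_def walk_append
      using walk_take[OF less.prems, of a'] walk_drop[OF less.prems, of b'] ab' by auto
    moreover have "length q < length p" using ab' by (simp add: q_def)
    moreover have "set q \<subseteq> set p" unfolding q_def using set_take_subset set_drop_subset by fastforce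
    ultimately show ?thesis using less.hyps by (meson order_trans)
  qed
qed

lemma walk_cons_conserv:
  assumes "walk T H p s t" "distinct (s # map H p)"
  shows "(\<Sum>e\<in>set p. if T e = v then 1 else 0::real) - (\<Sum>e\<in>set p. if H e = v then 1 else 0)
         = (if v = s then 1 else 0) - (if v = t then 1 else 0)"
  using assms
proof (induction p arbitrary: s)
  case Nil then show ?case by simp
next
  case (Cons e p)
  have "e \<notin> set p" using Cons.prems(2) by auto
  have IH: "(\<Sum>e\<in>set p. if T e = v then 1 else 0::real) - (\<Sum>e\<in>set p. if H e = v then 1 else 0)
         = (if v = H e then 1 else 0) - (if v = t then 1 else 0)"
    using Cons by auto
  show ?case using IH \<open>e \<notin> set p\<close> Cons.prems by auto
qed

lemma finite_distinct_lists: "finite A \<Longrightarrow> finite {p. set p \<subseteq> A \<and> distinct p}"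
proof -
  assume fA: "finite A"
  have "{p. set p \<subseteq> A \<and> distinct p} \<subseteq> {p. set p \<subseteq> A \<and> length p \<le> card A}"
  proof
    fix p assume "p \<in> {p. set p \<subseteq> A \<and> distinct p}"
    then have "set p \<subseteq> A" "distinct p" by auto
    then have "length p \<le> card A" using distinct_card[of p] card_mono[OF fA, of "set p"] by simp
    then show "p \<in> {p. set p \<subseteq> A \<and> length p \<le> card A}" using \<open>set p \<subseteq> A\<close> by simp
  qed
  then show ?thesis using finite_lists_length_le[OF fA] finite_subset by blast
qed

definition chained where "chained T H P \<longleftrightarrow> (\<forall>j. Suc j < length P \<longrightarrow> H (P ! j) = T (P ! Suc j))"

lemma chained_Cons: "chained T H (e#q) \<longleftrightarrow> (q \<noteq> [] \<longrightarrow> H e = T (hd q)) \<and> chained T H q"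
proof
  assume a: "chained T H (e#q)"
  have 1: "q \<noteq> [] \<longrightarrow> H e = T (hd q)"
  proof
    assume "q \<noteq> []"
    then have "Suc 0 < length (e#q)" by simp
    then have "H ((e#q)!0) = T ((e#q)!Suc 0)" using a unfolding chained_def by blast
    then show "H e = T (hd q)" using \<open>q \<noteq> []\<close> by (simp add: hd_conv_nth)
  qed
  have 2: "chained T H q" unfolding chained_def
  proof (intro allI impI)
    fix j assume "Suc j < length q"
    then have "Suc (Suc j) < length (e#q)" by simp
    then have "H ((e#q)!Suc j) = T ((e#q)!Suc (Suc j))" using a unfolding chained_def by blast
    then show "H (q ! j) = T (q ! Suc j)" by simp
  qed
  show "(q \<noteq> [] \<longrightarrow> H e = T (hd q)) \<and> chained T H q" using 1 2 by blast
next
  assume a: "(q \<noteq> [] \<longrightarrow> H e = T (hd q)) \<and> chained T H q"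
  show "chained T H (e#q)" unfolding chained_def
  proof (intro allI impI)
    fix j assume j: "Suc j < length (e # q)"
    show "H ((e # q) ! j) = T ((e # q) ! Suc j)"
    proof (cases j)
      case 0 then have "q \<noteq> []" using j by auto
      then show ?thesis using a 0 by (simp add: hd_conv_nth)
    next
      case (Suc j') then have "Suc j' < length q" using j by simp
      then show ?thesis using a Suc unfolding chained_def by simp
    qed
  qed
qed

lemma walk_iff: "P \<noteq> [] \<Longrightarrow> (T (hd P) = s \<and> H (last P) = t \<and> chained T H P) \<longleftrightarrow> walk T H P s t"
proof (induction P arbitrary: s)
  case Nil then show ?case by simp
next
  case (Cons e q)
  show ?case
  proof (cases "q = []")
    case True then show ?thesis by (auto simp: chained_def)
  next
    case False
    then show ?thesis using Cons.IH[OF False, of "H e"] by (auto simp: chained_Cons)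
  qed
qed

lemma st_paths_walk: "P \<in> st_paths A T H s t \<longleftrightarrow> P \<noteq> [] \<and> set P \<subseteq> A \<and> walk T H P s t \<and> distinct (s # map H P)"
  unfolding st_paths_def using walk_iff[of P T s H t] unfolding chained_def by auto

lemma finite_st_paths: "finite A \<Longrightarrow> finite (st_paths A T H s t)"
proof -
  assume fA: "finite A"
  have "st_paths A T H s t \<subseteq> {p. set p \<subseteq> A \<and> distinct p}"
    by (auto simp: st_paths_walk distinct_map)
  then show ?thesis using finite_distinct_lists[OF fA] finite_subset by blast
qed

definition SPD where "SPD A T H s t = {p. set p \<subseteq> A \<and> walk T H p s t \<and> distinct (s # map H p)}"

lemma finite_SPD: "finite A \<Longrightarrow> finite (SPD A T H s t)"
proof -
  assume fA: "finite A"
  have "SPD A T H s t \<subseteq> {p. set p \<subseteq> A \<and> distinct p}"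
    by (auto simp: SPD_def distinct_map)
  then show ?thesis using finite_distinct_lists[OF fA] finite_subset by blast
qed

lemma SPD_same: "SPD A T H s s = {[]}"
proof
  show "SPD A T H s s \<subseteq> {[]}"
  proof
    fix p assume p: "p \<in> SPD A T H s s"
    show "p \<in> {[]}"
    proof (rule ccontr)
      assume "p \<notin> {[]}"
      then have "p \<noteq> []" by simp
      have w: "walk T H p s s" using p by (simp add: SPD_def)
      have "last (s # map H p) = s" by (rule walk_last[OF w])
      then have "s \<in> set (map H p)" using \<open>p \<noteq> []\<close> by (metis last_ConsR last_in_set list.map_disc_iff)
      then show False using p by (auto simp: SPD_def)
    qed
  qed
  show "{[]} \<subseteq> SPD A T H s s" by (auto simp: SPD_def)
qed

lemma count_eq:
  assumes "finite A" "set p \<subseteq> A"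
  shows "(\<Sum>e\<in>{e\<in>A. P e}. if e \<in> set p then c else 0) = (\<Sum>e\<in>set p. if P e then c else (0::real))"
proof -
  have "(\<Sum>e\<in>set p. if P e then c else (0::real)) = (\<Sum>e\<in>A \<inter> set p. if P e then c else (0::real))"
    using assms(2) by (simp add: Int_absorb1)
  also have "\<dots> = (\<Sum>e\<in>A. if e \<in> set p then (if P e then c else 0) else 0)"
    using assms(1) by (rule sum.inter_restrict)
  also have "\<dots> = (\<Sum>e\<in>A. if P e then (if e \<in> set p then c else 0) else 0)"
    by (rule sum.cong) auto
  also have "\<dots> = (\<Sum>e\<in>{e\<in>A. P e}. if e \<in> set p then c else 0)"
    using assms(1) by (simp add: sum.inter_filter)
  finally show ?thesis by simp
qed

lemma sum_group_by:
  assumes "finite S" "finite A"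
  shows "(\<Sum>v\<in>S. \<Sum>e\<in>{e\<in>A. g e = v}. f e) = (\<Sum>e\<in>{e\<in>A. g e \<in> S}. (f e::real))"
proof -
  have "(\<Sum>v\<in>S. \<Sum>e\<in>{x\<in>{e\<in>A. g e \<in> S}. g x = v}. f e) = (\<Sum>e\<in>{e\<in>A. g e \<in> S}. f e)"
    by (rule sum.group) (use assms in auto)
  moreover have "\<And>v. v \<in> S \<Longrightarrow> {x\<in>{e\<in>A. g e \<in> S}. g x = v} = {e\<in>A. g e = v}" by auto
  ultimately show ?thesis by simp
qed

lemma rtrancl_walk:
  assumes "(s, v) \<in> {(T e, H e) | e. e \<in> A \<and> 0 < f e}\<^sup>*"
  shows "\<exists>p. walk T H p s v \<and> (\<forall>e\<in>set p. e \<in> A \<and> 0 < (f e::real))"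
  using assms
proof (induction rule: rtrancl_induct)
  case base then show ?case by (rule exI[of _ "[]"]) simp
next
  case (step y z)
  then obtain p where p: "walk T H p s y" "\<forall>e\<in>set p. e \<in> A \<and> 0 < f e" by blast
  from step obtain e where e: "e \<in> A" "0 < f e" "T e = y" "H e = z" by blast
  have "walk T H (p @ [e]) s z" using p e by (auto simp: walk_append)
  then show ?case using p e by (intro exI[of _ "p @ [e]"]) auto
qed

lemma positive_path:
  fixes f :: "'a \<Rightarrow> real"
  assumes fA: "finite A" and fV: "finite V" and ends: "\<forall>e\<in>A. T e \<in> V \<and> H e \<in> V"
    and nn: "\<forall>e\<in>A. 0 \<le> f e" and sV: "s \<in> V" and tV: "t \<in> V" and st: "s \<noteq> t" and d0: "0 < d"
    and cons: "\<forall>v\<in>V. (\<Sum>e\<in>{e\<in>A. T e = v}. f e) - (\<Sum>e\<in>{e\<in>A. H e = v}. f e)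
                  = (if v = s then d else 0) - (if v = t then d else 0)"
  shows "\<exists>p\<in>SPD A T H s t. \<forall>e\<in>set p. 0 < f e"
proof -
  define Rel where "Rel = {(T e, H e) | e. e \<in> A \<and> 0 < f e}"
  define S where "S = {v\<in>V. (s, v) \<in> Rel\<^sup>*}"
  have tS: "t \<in> S"
  proof (rule ccontr)
    assume tS: "t \<notin> S"
    have sS: "s \<in> S" using sV by (simp add: S_def)
    have fS: "finite S" using fV by (simp add: S_def)
    have "(\<Sum>v\<in>S. (\<Sum>e\<in>{e\<in>A. T e = v}. f e) - (\<Sum>e\<in>{e\<in>A. H e = v}. f e))
        = (\<Sum>v\<in>S. (if v = s then d else 0) - (if v = t then d else 0))"
      by (rule sum.cong) (use cons S_def in auto)
    also have "\<dots> = d" using sS tS fS by (simp add: sum_subtractf)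
    finally have eq1: "(\<Sum>v\<in>S. (\<Sum>e\<in>{e\<in>A. T e = v}. f e) - (\<Sum>e\<in>{e\<in>A. H e = v}. f e)) = d" .
    have "(\<Sum>v\<in>S. (\<Sum>e\<in>{e\<in>A. T e = v}. f e) - (\<Sum>e\<in>{e\<in>A. H e = v}. f e))
       = (\<Sum>e\<in>{e\<in>A. T e \<in> S}. f e) - (\<Sum>e\<in>{e\<in>A. H e \<in> S}. f e)"
      using sum_group_by[OF fS fA, where g=T and f=f] sum_group_by[OF fS fA, where g=H and f=f] by (simp add: sum_subtractf)
    also have "\<dots> = (\<Sum>e\<in>A. if T e \<in> S then f e else 0) - (\<Sum>e\<in>A. if H e \<in> S then f e else 0)"
      using fA by (simp add: sum.inter_filter)
    also have "\<dots> \<le> 0"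
    proof -
      have "(\<Sum>e\<in>A. if T e \<in> S then f e else 0) \<le> (\<Sum>e\<in>A. if H e \<in> S then f e else 0)"
      proof (rule sum_mono)
        fix e assume eA: "e \<in> A"
        show "(if T e \<in> S then f e else 0) \<le> (if H e \<in> S then f e else 0)"
        proof (cases "T e \<in> S \<and> 0 < f e")
          case True
          then have "(T e, H e) \<in> Rel" using eA by (auto simp: Rel_def)
          then have "H e \<in> S" using True ends eA by (auto simp: S_def intro: rtrancl_into_rtrancl)
          then show ?thesis using True by (simp only: if_True)
        next
          case False
          have fe: "0 \<le> f e" using nn eA by blast
          show ?thesis
          proof (cases "T e \<in> S")
            case True then have "f e = 0" using False fe by simp
            then show ?thesis by simp
          next
            case False then show ?thesis using fe by simp
          qed
        qed
      qed
      then show ?thesis by simp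
    qed
    finally show False using eq1 d0 by simp
  qed
  then have "(s, t) \<in> Rel\<^sup>*" by (simp add: S_def)
  then have "(s, t) \<in> {(T e, H e) | e. e \<in> A \<and> 0 < f e}\<^sup>*" by (simp only: Rel_def)
  from rtrancl_walk[OF this] obtain p where p: "walk T H p s t" "\<forall>e\<in>set p. e \<in> A \<and> 0 < f e"
    by blast
  obtain q where q: "walk T H q s t" "set q \<subseteq> set p" "distinct (s # map H q)"
    using walk_simple[OF p(1)] by blast
  have "set q \<subseteq> A" using q(2) p(2) by blast
  then have "q \<in> SPD A T H s t" using q unfolding SPD_def by blast
  moreover have "\<forall>e\<in>set q. 0 < f e" using q(2) p(2) by blast
  ultimately show ?thesis by blast
qed

lemma decomp_ne:
  fixes f :: "'a \<Rightarrow> real"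
  assumes fA: "finite A" and fV: "finite V" and ends: "\<forall>e\<in>A. T e \<in> V \<and> H e \<in> V"
    and sV: "s \<in> V" and tV: "t \<in> V" and st: "s \<noteq> t"
    and nn: "\<forall>e\<in>A. 0 \<le> f e" and d0: "0 \<le> d"
    and cons: "\<forall>v\<in>V. (\<Sum>e\<in>{e\<in>A. T e = v}. f e) - (\<Sum>e\<in>{e\<in>A. H e = v}. f e)
                  = (if v = s then d else 0) - (if v = t then d else 0)"
  shows "\<exists>w. (\<forall>p. 0 \<le> w p) \<and> (\<Sum>p\<in>SPD A T H s t. w p) = d \<and>
             (\<forall>e\<in>A. (\<Sum>p\<in>{p\<in>SPD A T H s t. e \<in> set p}. w p) \<le> f e)"
  using nn d0 cons
proof (induction "card {e\<in>A. 0 < f e}" arbitrary: f d rule: less_induct)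
  case less
  have fS: "finite (SPD A T H s t)" using fA by (rule finite_SPD)
  show ?case
  proof (cases "d = 0")
    case True
    have "\<forall>e\<in>A. (\<Sum>p\<in>{p\<in>SPD A T H s t. e \<in> set p}. (0::real)) \<le> f e" using less.prems(1) by simp
    then show ?thesis using True by (intro exI[of _ "\<lambda>p. 0"]) simp
  next
    case False
    then have dpos: "0 < d" using less.prems(2) by simp
    obtain p where p: "p \<in> SPD A T H s t" "\<forall>e\<in>set p. 0 < f e"
      using positive_path[OF fA fV ends less.prems(1) sV tV st dpos less.prems(3)] by blast
    have pw: "walk T H p s t" "set p \<subseteq> A" "distinct (s # map H p)" using p(1) by (auto simp: SPD_def)
    have pne: "p \<noteq> []" using pw(1) st by (cases p) auto
    define m where "m = Min (f ` set p)"
    have m_le: "\<forall>e\<in>set p. m \<le> f e" unfolding m_def by simp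
    have m_in: "m \<in> f ` set p" unfolding m_def using pne by (intro Min_in) auto
    have m_pos: "0 < m" using m_in p(2) by auto
    show ?thesis
    proof (cases "d \<le> m")
      case True
      define w where "w = (\<lambda>q. if q = p then d else (0::real))"
      have "(\<Sum>q\<in>SPD A T H s t. w q) = d" unfolding w_def using fS p(1) by simp
      moreover have "\<forall>e\<in>A. (\<Sum>q\<in>{q\<in>SPD A T H s t. e \<in> set q}. w q) \<le> f e"
      proof
        fix e assume eA: "e \<in> A"
        have fS': "finite {q\<in>SPD A T H s t. e \<in> set q}" using fS by simp
        have "(\<Sum>q\<in>{q\<in>SPD A T H s t. e \<in> set q}. w q) = (if e \<in> set p then d else 0)"
          unfolding w_def using fS' p(1) by (simp add: sum.delta)
        also have "\<dots> \<le> f e" using True m_le less.prems(1) eA by auto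
        finally show "(\<Sum>q\<in>{q\<in>SPD A T H s t. e \<in> set q}. w q) \<le> f e" .
      qed
      moreover have "\<forall>q. 0 \<le> w q" unfolding w_def using dpos by simp
      ultimately show ?thesis by blast
    next
      case False
      obtain e0 where e0: "e0 \<in> set p" "f e0 = m" using m_in by blast
      define f' where "f' = (\<lambda>e. f e - m * (if e \<in> set p then 1 else 0))"
      have nn': "\<forall>e\<in>A. 0 \<le> f' e" unfolding f'_def using m_le less.prems(1) by auto
      have d0': "0 \<le> d - m" using False by simp
      have cons': "\<forall>v\<in>V. (\<Sum>e\<in>{e\<in>A. T e = v}. f' e) - (\<Sum>e\<in>{e\<in>A. H e = v}. f' e)
                  = (if v = s then d - m else 0) - (if v = t then d - m else 0)"
      proof
        fix v assume vV: "v \<in> V"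
        have cT: "(\<Sum>e\<in>{e\<in>A. T e = v}. f' e) = (\<Sum>e\<in>{e\<in>A. T e = v}. f e) - m * (\<Sum>e\<in>set p. if T e = v then 1 else 0)"
          unfolding f'_def sum_subtractf sum_distrib_left[symmetric] count_eq[OF fA pw(2)] by simp
        have cH: "(\<Sum>e\<in>{e\<in>A. H e = v}. f' e) = (\<Sum>e\<in>{e\<in>A. H e = v}. f e) - m * (\<Sum>e\<in>set p. if H e = v then 1 else 0)"
          unfolding f'_def sum_subtractf sum_distrib_left[symmetric] count_eq[OF fA pw(2)] by simp
        have w: "(\<Sum>e\<in>set p. if T e = v then 1 else 0::real) - (\<Sum>e\<in>set p. if H e = v then 1 else 0)
         = (if v = s then 1 else 0) - (if v = t then 1 else 0)"
          by (rule walk_cons_conserv[OF pw(1) pw(3)])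
        have c: "(\<Sum>e\<in>{e\<in>A. T e = v}. f e) - (\<Sum>e\<in>{e\<in>A. H e = v}. f e)
                  = (if v = s then d else 0) - (if v = t then d else 0)" using less.prems(3) vV by blast
        have "(\<Sum>e\<in>{e\<in>A. T e = v}. f' e) - (\<Sum>e\<in>{e\<in>A. H e = v}. f' e)
            = ((\<Sum>e\<in>{e\<in>A. T e = v}. f e) - (\<Sum>e\<in>{e\<in>A. H e = v}. f e))
              - m * ((\<Sum>e\<in>set p. if T e = v then 1 else 0::real) - (\<Sum>e\<in>set p. if H e = v then 1 else 0))"
          unfolding cT cH by (simp add: algebra_simps)
        also have "\<dots> = (if v = s then d - m else 0) - (if v = t then d - m else 0)"
          unfolding c w using st by auto
        finally show "(\<Sum>e\<in>{e\<in>A. T e = v}. f' e) - (\<Sum>e\<in>{e\<in>A. H e = v}. f' e)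
                  = (if v = s then d - m else 0) - (if v = t then d - m else 0)" .
      qed
      have sub: "{e\<in>A. 0 < f' e} \<subset> {e\<in>A. 0 < f e}"
      proof
        show "{e\<in>A. 0 < f' e} \<subseteq> {e\<in>A. 0 < f e}" unfolding f'_def using m_pos by auto
        have "e0 \<in> {e\<in>A. 0 < f e}" using e0 p(2) pw(2) by auto
        moreover have "e0 \<notin> {e\<in>A. 0 < f' e}" unfolding f'_def using e0 by auto
        ultimately show "{e\<in>A. 0 < f' e} \<noteq> {e\<in>A. 0 < f e}" by blast
      qed
      have "card {e\<in>A. 0 < f' e} < card {e\<in>A. 0 < f e}"
        by (rule psubset_card_mono) (use fA sub in auto)
      from less.hyps[OF this nn' d0' cons'] obtain w' where
        w': "\<forall>p. 0 \<le> w' p" "(\<Sum>p\<in>SPD A T H s t. w' p) = d - m"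
            "\<forall>e\<in>A. (\<Sum>p\<in>{p\<in>SPD A T H s t. e \<in> set p}. w' p) \<le> f' e" by blast
      define w where "w = (\<lambda>q. w' q + (if q = p then m else 0))"
      have "(\<Sum>q\<in>SPD A T H s t. w q) = d" unfolding w_def using fS p(1) w'(2) by (simp add: sum.distrib)
      moreover have "\<forall>e\<in>A. (\<Sum>q\<in>{q\<in>SPD A T H s t. e \<in> set q}. w q) \<le> f e"
      proof
        fix e assume eA: "e \<in> A"
        have fS': "finite {q\<in>SPD A T H s t. e \<in> set q}" using fS by simp
        have "(\<Sum>q\<in>{q\<in>SPD A T H s t. e \<in> set q}. w q)
             = (\<Sum>q\<in>{q\<in>SPD A T H s t. e \<in> set q}. w' q) + (if e \<in> set p then m else 0)"
          unfolding w_def using fS' p(1) by (simp add: sum.distrib sum.delta)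
        also have "\<dots> \<le> f' e + (if e \<in> set p then m else 0)" using w'(3) eA by simp
        also have "\<dots> = f e" unfolding f'_def by simp
        finally show "(\<Sum>q\<in>{q\<in>SPD A T H s t. e \<in> set q}. w q) \<le> f e" .
      qed
      moreover have "\<forall>q. 0 \<le> w q" unfolding w_def using w'(1) m_pos by simp
      ultimately show ?thesis by blast
    qed
  qed
qed

lemma decomp:
  fixes f :: "'a \<Rightarrow> real"
  assumes fA: "finite A" and fV: "finite V" and ends: "\<forall>e\<in>A. T e \<in> V \<and> H e \<in> V"
    and sV: "s \<in> V" and tV: "t \<in> V"
    and nn: "\<forall>e\<in>A. 0 \<le> f e" and d0: "0 \<le> d"
    and cons: "\<forall>v\<in>V. (\<Sum>e\<in>{e\<in>A. T e = v}. f e) - (\<Sum>e\<in>{e\<in>A. H e = v}. f e)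
                  = (if v = s then d else 0) - (if v = t then d else 0)"
  shows "\<exists>w. (\<forall>p. 0 \<le> w p) \<and> (\<Sum>p\<in>SPD A T H s t. w p) = d \<and>
             (\<forall>e\<in>A. (\<Sum>p\<in>{p\<in>SPD A T H s t. e \<in> set p}. w p) \<le> f e)"
proof (cases "s = t")
  case True
  have emp: "\<And>e. {p\<in>SPD A T H s t. e \<in> set p} = {}" using True by (auto simp: SPD_same)
  have "\<forall>e\<in>A. (\<Sum>p\<in>{p\<in>SPD A T H s t. e \<in> set p}. (\<lambda>q. if q = [] then d else 0) p) \<le> f e"
    using nn by (simp only: emp sum.empty)
  then show ?thesis using True d0 by (intro exI[of _ "\<lambda>q. if q = [] then d else 0"]) (simp add: SPD_same)
next
  case False
  then show ?thesis using decomp_ne[OF fA fV ends sV tV False nn d0 cons] by blast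
qed

fun unold :: "'a rarc \<Rightarrow> 'a list" where
  "unold (AOld e) = [e]" | "unold (AIn i) = []" | "unold (AOut i) = []" | "unold AStar = []"

definition inner :: "'a rarc list \<Rightarrow> 'a list" where "inner P = concat (map unold P)"

definition fi :: "'a rarc list \<Rightarrow> nat" where "fi P = (case hd P of AIn i \<Rightarrow> i | _ \<Rightarrow> 0)"
definition fj :: "'a rarc list \<Rightarrow> nat" where "fj P = (case last P of AOut j \<Rightarrow> j | _ \<Rightarrow> 0)"

definition mk :: "nat \<Rightarrow> nat \<Rightarrow> 'a list \<Rightarrow> 'a rarc list" where
  "mk i j p = AIn i # map AOld p @ [AOut j]"

lemma inner_map_old0[simp]: "concat (map (unold \<circ> AOld) p) = p"
  by (induction p) auto

lemma inner_map_old[simp]: "concat (map unold (map AOld p)) = p"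
  by simp

lemma mk_simps[simp]: "inner (mk i j p) = p" "fi (mk i j p) = i" "fj (mk i j p) = j"
  by (auto simp: mk_def inner_def fi_def fj_def)

lemma mk_set: "set (mk i j p) = insert (AIn i) (insert (AOut j) (AOld ` set p))"
  by (auto simp: mk_def)

lemma walk_loop_nil: "walk T H q x x \<Longrightarrow> x \<notin> set (map H q) \<Longrightarrow> q = []"
proof (rule ccontr)
  assume w: "walk T H q x x" and nx: "x \<notin> set (map H q)" and ne: "q \<noteq> []"
  have "last (x # map H q) = x" by (rule walk_last[OF w])
  then have "last (map H q) = x" using ne by simp
  then have "x \<in> set (map H q)" using ne by (metis last_in_set list.map_disc_iff)
  then show False using nx by simp
qed

lemma walk_map_old: "walk tailf headf p v w \<Longrightarrow>
   walk (red_tail tailf src snk) (red_head headf src snk) (map AOld p) (VOld v) (VOld w)"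
  by (induction p arbitrary: v) auto

lemma tail_walk:
  assumes "walk (red_tail tailf src snk) (red_head headf src snk) q (VOld v) VSnk"
    and "set q \<subseteq> red_arcs A k" and "distinct (VOld v # map (red_head headf src snk) q)"
  shows "\<exists>j p. j \<in> {1..k} \<and> q = map AOld p @ [AOut j] \<and> p \<in> SPD A tailf headf v (snk j)"
  using assms
proof (induction q arbitrary: v)
  case Nil then show ?case by simp
next
  case (Cons e q)
  show ?case
  proof (cases e)
    case (AOld a)
    have aA: "a \<in> A" using Cons.prems(2) AOld by (auto simp: red_arcs_def)
    have ta: "tailf a = v" using Cons.prems(1) AOld by simp
    have w: "walk (red_tail tailf src snk) (red_head headf src snk) q (VOld (headf a)) VSnk"
      using Cons.prems(1) AOld by simp
    have ds: "distinct (VOld (headf a) # map (red_head headf src snk) q)" using Cons.prems(3) AOld by simp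
    obtain j p where jp: "j \<in> {1..k}" "q = map AOld p @ [AOut j]" "p \<in> SPD A tailf headf (headf a) (snk j)"
      using Cons.IH[OF w _ ds] Cons.prems(2) by auto
    have "VOld v \<notin> set (map (red_head headf src snk) (e#q))" using Cons.prems(3) by simp
    then have "v \<notin> set (map headf (a # p))" using AOld jp(2) by auto
    then have "a # p \<in> SPD A tailf headf v (snk j)" using jp(3) aA ta by (auto simp: SPD_def)
    then show ?thesis using jp AOld by (intro exI[of _ j] exI[of _ "a # p"]) auto
  next
    case (AIn i) then show ?thesis using Cons.prems(1) by simp
  next
    case (AOut j)
    have jk: "j \<in> {1..k}" using Cons.prems(2) AOut by (auto simp: red_arcs_def)
    have v: "v = snk j" using Cons.prems(1) AOut by simp
    have w: "walk (red_tail tailf src snk) (red_head headf src snk) q VSnk VSnk" using Cons.prems(1) AOut by simp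
    have "VSnk \<notin> set (map (red_head headf src snk) q)" using Cons.prems(3) AOut by simp
    then have "q = []" using walk_loop_nil[OF w] by blast
    moreover have "[] \<in> SPD A tailf headf v (snk j)" using v by (simp add: SPD_def)
    ultimately show ?thesis using jk AOut by (intro exI[of _ j] exI[of _ "[]"]) auto
  next
    case AStar then show ?thesis using Cons.prems(1) by simp
  qed
qed

lemma SP_char:
  "P \<in> st_paths (red_arcs A k) (red_tail tailf src snk) (red_head headf src snk) VSrc VSnk \<longleftrightarrow>
   P = [AStar] \<or> (\<exists>i j p. i \<in> {1..k} \<and> j \<in> {1..k} \<and> P = mk i j p \<and> p \<in> SPD A tailf headf (src i) (snk j))"
  (is "?L \<longleftrightarrow> ?R")
proof
  assume ?L
  then have P: "P \<noteq> []" "set P \<subseteq> red_arcs A k"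
    "walk (red_tail tailf src snk) (red_head headf src snk) P VSrc VSnk"
    "distinct (VSrc # map (red_head headf src snk) P)" by (auto simp: st_paths_walk)
  obtain e q where eq: "P = e # q" using P(1) by (cases P) auto
  show ?R
  proof (cases e)
    case (AOld a) then show ?thesis using P(3) eq by simp
  next
    case (AOut j) then show ?thesis using P(3) eq by simp
  next
    case AStar
    have w: "walk (red_tail tailf src snk) (red_head headf src snk) q VSnk VSnk" using P(3) eq AStar by simp
    have "VSnk \<notin> set (map (red_head headf src snk) q)" using P(4) eq AStar by simp
    then have "q = []" using walk_loop_nil[OF w] by blast
    then show ?thesis using eq AStar by simp
  next
    case (AIn i)
    have ik: "i \<in> {1..k}" using P(2) eq AIn by (auto simp: red_arcs_def)
    have w: "walk (red_tail tailf src snk) (red_head headf src snk) q (VOld (src i)) VSnk" using P(3) eq AIn by simp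
    have ds: "distinct (VOld (src i) # map (red_head headf src snk) q)" using P(4) eq AIn by simp
    have sq: "set q \<subseteq> red_arcs A k" using P(2) eq by simp
    obtain j p where jp: "j \<in> {1..k}" "q = map AOld p @ [AOut j]" "p \<in> SPD A tailf headf (src i) (snk j)"
      using tail_walk[OF w sq ds] by blast
    have "P = mk i j p" using eq AIn jp(2) by (simp add: mk_def)
    then show ?thesis using ik jp by blast
  qed
next
  assume ?R
  then show ?L
  proof
    assume "P = [AStar]" then show ?L by (simp add: st_paths_walk red_arcs_def)
  next
    assume "\<exists>i j p. i \<in> {1..k} \<and> j \<in> {1..k} \<and> P = mk i j p \<and> p \<in> SPD A tailf headf (src i) (snk j)"
    then obtain i j p where ijp: "i \<in> {1..k}" "j \<in> {1..k}" "P = mk i j p" "p \<in> SPD A tailf headf (src i) (snk j)"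
      by blast
    have p: "set p \<subseteq> A" "walk tailf headf p (src i) (snk j)" "distinct (src i # map headf p)"
      using ijp(4) by (auto simp: SPD_def)
    have "set P \<subseteq> red_arcs A k" using ijp(1,2,3) p(1) by (auto simp: mk_def red_arcs_def)
    moreover have "walk (red_tail tailf src snk) (red_head headf src snk) P VSrc VSnk"
      using ijp(3) walk_map_old[OF p(2), of src snk] by (simp add: mk_def walk_append)
    moreover have "distinct (VSrc # map (red_head headf src snk) P)"
    proof -
      have "map (red_head headf src snk) P = VOld (src i) # map (VOld \<circ> headf) p @ [VSnk]"
        using ijp(3) by (simp add: mk_def)
      moreover have "distinct (map (VOld \<circ> headf) p)" "src i \<notin> headf ` set p"
        using p(3) by (auto simp: distinct_map inj_on_def)
      ultimately show ?thesis by auto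
    qed
    moreover have "P \<noteq> []" using ijp(3) by (simp add: mk_def)
    ultimately show ?L by (simp only: st_paths_walk) blast
  qed
qed

lemma budget_swap:
  assumes "finite E" "finite S" "\<forall>P\<in>S. set P \<subseteq> E"
  shows "(\<Sum>e\<in>E. a e * (\<Sum>P\<in>{P\<in>S. e \<in> set P}. g e P)) = (\<Sum>P\<in>S. \<Sum>e\<in>set P. a e * (g e P::real))"
proof -
  have "(\<Sum>e\<in>E. a e * (\<Sum>P\<in>{P\<in>S. e \<in> set P}. g e P)) = (\<Sum>e\<in>E. \<Sum>P\<in>S. if e \<in> set P then a e * g e P else 0)"
    using assms(2) by (simp add: sum_distrib_left sum.inter_filter if_distrib cong: if_cong)
  also have "\<dots> = (\<Sum>P\<in>S. \<Sum>e\<in>E. if e \<in> set P then a e * g e P else 0)" by (rule sum.swap)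
  also have "\<dots> = (\<Sum>P\<in>S. \<Sum>e\<in>set P. a e * g e P)"
  proof (rule sum.cong)
    fix P assume "P \<in> S"
    then have "E \<inter> set P = set P" using assms(3) by blast
    then show "(\<Sum>e\<in>E. if e \<in> set P then a e * g e P else 0) = (\<Sum>e\<in>set P. a e * g e P)"
      using sum.inter_restrict[OF assms(1), of "\<lambda>e. a e * g e P" "set P"] by simp
  qed simp
  finally show ?thesis .
qed

context
  fixes A :: "'a set" and k :: nat and tailf headf :: "'a \<Rightarrow> 'v" and src snk :: "nat \<Rightarrow> 'v"
begin

abbreviation "SP \<equiv> st_paths (red_arcs A k) (red_tail tailf src snk) (red_head headf src snk) VSrc VSnk"
abbreviation "SPc \<equiv> SP - {[AStar]}"

lemma SPc_form:
  assumes "P \<in> SPc"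
  shows "fi P \<in> {1..k}" "fj P \<in> {1..k}" "P = mk (fi P) (fj P) (inner P)"
        "inner P \<in> SPD A tailf headf (src (fi P)) (snk (fj P))"
proof -
  obtain i j p where ijp: "i \<in> {1..k}" "j \<in> {1..k}" "P = mk i j p" "p \<in> SPD A tailf headf (src i) (snk j)"
    using assms SP_char by blast
  show "fi P \<in> {1..k}" "fj P \<in> {1..k}" "P = mk (fi P) (fj P) (inner P)"
        "inner P \<in> SPD A tailf headf (src (fi P)) (snk (fj P))" using ijp by auto
qed

lemma mk_in_SPc:
  assumes "i \<in> {1..k}" "j \<in> {1..k}" "p \<in> SPD A tailf headf (src i) (snk j)"
  shows "mk i j p \<in> SPc"
proof -
  have "mk i j p \<in> SP"
    using SP_char[where P="mk i j p" and A=A and k=k and tailf=tailf and headf=headf and src=src and snk=snk] assms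
    by blast
  moreover have "mk i j p \<noteq> [AStar]" by (simp add: mk_def)
  ultimately show ?thesis by blast
qed

lemma AStar_SP: "[AStar] \<in> SP"
  using SP_char by blast

lemma finite_red_arcs: "finite A \<Longrightarrow> finite (red_arcs A k)"
  by (simp add: red_arcs_def)

lemma finite_SP: "finite A \<Longrightarrow> finite SP"
  by (rule finite_st_paths[OF finite_red_arcs])

lemma SP_sub: "P \<in> SP \<Longrightarrow> set P \<subseteq> red_arcs A k"
  by (simp add: st_paths_walk)

lemma SPc_set: "P \<in> SPc \<Longrightarrow> set P = insert (AIn (fi P)) (insert (AOut (fj P)) (AOld ` set (inner P)))"
  using SPc_form(3)[of P] mk_set by metis

lemma SP_AStar: "{P\<in>SP. AStar \<in> set P} = {[AStar]}"
proof -
  have "\<And>P. P \<in> SPc \<Longrightarrow> AStar \<notin> set P" using SPc_set by auto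
  then show ?thesis using AStar_SP by auto
qed

lemma SP_AIn: "{P\<in>SP. AIn i \<in> set P} = {P\<in>SPc. fi P = i}"
proof -
  have h: "\<And>P. P \<in> SPc \<Longrightarrow> AIn i \<in> set P \<longleftrightarrow> fi P = i" using SPc_set by auto
  have "\<And>P. P \<in> SP \<Longrightarrow> AIn i \<in> set P \<Longrightarrow> P \<noteq> [AStar]" by auto
  then show ?thesis using h by blast
qed

lemma SP_AOut: "{P\<in>SP. AOut i \<in> set P} = {P\<in>SPc. fj P = i}"
proof -
  have h: "\<And>P. P \<in> SPc \<Longrightarrow> AOut i \<in> set P \<longleftrightarrow> fj P = i" using SPc_set by auto
  have "\<And>P. P \<in> SP \<Longrightarrow> AOut i \<in> set P \<Longrightarrow> P \<noteq> [AStar]" by auto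
  then show ?thesis using h by blast
qed

lemma SP_AOld: "{P\<in>SP. AOld a \<in> set P} = {P\<in>SPc. a \<in> set (inner P)}"
proof -
  have h: "\<And>P. P \<in> SPc \<Longrightarrow> AOld a \<in> set P \<longleftrightarrow> a \<in> set (inner P)" using SPc_set by auto
  have "\<And>P. P \<in> SP \<Longrightarrow> AOld a \<in> set P \<Longrightarrow> P \<noteq> [AStar]" by auto
  then show ?thesis using h by blast
qed

lemma SP_split: "SP = insert [AStar] SPc" "[AStar] \<notin> SPc"
  using AStar_SP by auto

lemma reindex_SPc:
  assumes "i \<in> {1..k}"
  shows "(\<Sum>P\<in>{P\<in>SPc. fi P = i \<and> fj P = i \<and> Q (inner P)}. g (inner P)) =
         (\<Sum>p\<in>{p\<in>SPD A tailf headf (src i) (snk i). Q p}. (g p :: real))"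
proof -
  have inj: "inj_on (mk i i) {p\<in>SPD A tailf headf (src i) (snk i). Q p}"
    by (rule inj_onI) (metis mk_simps(1))
  have img: "mk i i ` {p\<in>SPD A tailf headf (src i) (snk i). Q p} = {P\<in>SPc. fi P = i \<and> fj P = i \<and> Q (inner P)}"
  proof
    show "mk i i ` {p\<in>SPD A tailf headf (src i) (snk i). Q p} \<subseteq> {P\<in>SPc. fi P = i \<and> fj P = i \<and> Q (inner P)}"
      using mk_in_SPc[OF assms assms] by auto
  next
    show "{P\<in>SPc. fi P = i \<and> fj P = i \<and> Q (inner P)} \<subseteq> mk i i ` {p\<in>SPD A tailf headf (src i) (snk i). Q p}"
    proof
      fix P assume P: "P \<in> {P\<in>SPc. fi P = i \<and> fj P = i \<and> Q (inner P)}"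
      then have "P = mk i i (inner P)" "inner P \<in> SPD A tailf headf (src i) (snk i)"
        using SPc_form[of P] by auto
      then show "P \<in> mk i i ` {p\<in>SPD A tailf headf (src i) (snk i). Q p}" using P by blast
    qed
  qed
  have "(\<Sum>p\<in>{p\<in>SPD A tailf headf (src i) (snk i). Q p}. g p) =
        (\<Sum>p\<in>{p\<in>SPD A tailf headf (src i) (snk i). Q p}. g (inner (mk i i p)))" by simp
  also have "\<dots> = (\<Sum>P\<in>mk i i ` {p\<in>SPD A tailf headf (src i) (snk i). Q p}. g (inner P))"
    by (rule sum.reindex[OF inj, symmetric, unfolded comp_def])
  finally show ?thesis using img by simp
qed

end

context
  fixes A :: "'a set" and k :: nat and tailf headf :: "'a \<Rightarrow> 'v" and src snk :: "nat \<Rightarrow> 'v"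
    and d :: "nat \<Rightarrow> real"
  assumes fA: "finite A" and d0: "\<forall>i\<in>{1..k}. 0 \<le> d i"
begin

abbreviation "SPx \<equiv> SP A k tailf headf src snk"
abbreviation "SPcx \<equiv> SPx - {[AStar]}"
abbreviation "Ar \<equiv> red_arcs A k"
abbreviation "Tr \<equiv> red_tail tailf src snk"
abbreviation "Hr \<equiv> red_head headf src snk"
abbreviation cr :: "'a rarc \<Rightarrow> real" where "cr \<equiv> (\<lambda>e. real_of_ereal (red_cost k e))"
abbreviation "Bd \<equiv> red_budget k d"

lemma fSPx: "finite SPx" using finite_SP[OF fA] .
lemma fSPcx: "finite SPcx" using fSPx by simp
lemma SPx_sub: "\<forall>P\<in>SPx. set P \<subseteq> Ar" by (simp add: st_paths_walk)
lemma SPx_split: "SPx = insert [AStar] SPcx" "[AStar] \<notin> SPcx"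
  using AStar_SP[where A=A and k=k and tailf=tailf and headf=headf and src=src and snk=snk] by auto
lemma sum_split: "(\<Sum>P\<in>SPx. g P) = g [AStar] + (\<Sum>P\<in>SPcx. (g P::real))"
  using SPx_split fSPcx by (metis sum.insert)

lemma sum_by_fi: "(\<Sum>P\<in>SPcx. g P) = (\<Sum>i\<in>{1..k}. \<Sum>P\<in>{P\<in>SPcx. fi P = i}. (g P :: real))"
proof -
  have "{P\<in>SPcx. fi P \<in> {1..k}} = SPcx" using SPc_form(1) by blast
  then show ?thesis using sum_group_by[OF _ fSPcx, where S="{1..k}" and g=fi and f=g] by simp
qed

lemma sum_by_fj: "(\<Sum>P\<in>SPcx. g P) = (\<Sum>i\<in>{1..k}. \<Sum>P\<in>{P\<in>SPcx. fj P = i}. (g P :: real))"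
proof -
  have "{P\<in>SPcx. fj P \<in> {1..k}} = SPcx" using SPc_form(2) by blast
  then show ?thesis using sum_group_by[OF _ fSPcx, where S="{1..k}" and g=fj and f=g] by simp
qed

lemma budget_eq:
  assumes "\<forall>i\<in>{1..k}. (\<Sum>P\<in>{P\<in>SPcx. fi P = i}. x P) = d i"
  shows "(\<Sum>P\<in>SPcx. real (fi P) * x P) = Bd"
proof -
  have "(\<Sum>P\<in>SPcx. real (fi P) * x P) = (\<Sum>i\<in>{1..k}. \<Sum>P\<in>{P\<in>SPcx. fi P = i}. real (fi P) * x P)"
    by (rule sum_by_fi)
  also have "\<dots> = (\<Sum>i\<in>{1..k}. real i * (\<Sum>P\<in>{P\<in>SPcx. fi P = i}. x P))"
    by (rule sum.cong) (simp_all add: sum_distrib_left)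
  also have "\<dots> = Bd" using assms by (simp add: red_budget_def)
  finally show ?thesis .
qed

lemma Omega_cost:
  assumes "z \<in> interdictions Ar Tr Hr VSrc VSnk (red_cost k) Bd"
  shows "(\<Sum>P\<in>SPx. \<Sum>e\<in>set P. cr e * z e P) \<le> Bd"
proof -
  have "(\<Sum>e\<in>Ar. cr e * (\<Sum>P\<in>{P\<in>SPx. e \<in> set P}. z e P)) \<le> Bd"
    using assms by (simp add: interdictions_def)
  then show ?thesis
    using budget_swap[OF finite_red_arcs[OF fA, where k=k] fSPx SPx_sub, where a=cr and g=z] by simp
qed

lemma in_Omega:
  assumes "\<forall>e P. 0 \<le> z e P" "\<forall>a P. z (AOld a) P = 0" "(\<Sum>P\<in>SPx. \<Sum>e\<in>set P. cr e * z e P) \<le> Bd"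
  shows "z \<in> interdictions Ar Tr Hr VSrc VSnk (red_cost k) Bd"
proof -
  have "\<forall>e P. red_cost k e = \<infinity> \<longrightarrow> z e P = 0"
  proof (intro allI impI)
    fix e :: "'a rarc" and P assume "red_cost k e = \<infinity>"
    then obtain a where "e = AOld a" by (cases e) auto
    then show "z e P = 0" using assms(2) by simp
  qed
  moreover have "(\<Sum>e\<in>Ar. cr e * (\<Sum>P\<in>{P\<in>SPx. e \<in> set P}. z e P)) \<le> Bd"
    using budget_swap[OF finite_red_arcs[OF fA, where k=k] fSPx SPx_sub, where a=cr and g=z] assms(3) by simp
  ultimately show ?thesis using assms(1) by (simp add: interdictions_def)
qed

lemma max_min: "max 0 (x - Z) = x - min x (Z::real)" by auto

lemma val_lower:
  assumes xnn: "\<forall>P\<in>SPx. 0 \<le> x P" and xstar: "x [AStar] = 1"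
    and xdiag: "\<forall>P\<in>SPcx. x P \<noteq> 0 \<longrightarrow> fi P = fj P"
    and Fi: "\<forall>i\<in>{1..k}. (\<Sum>P\<in>{P\<in>SPcx. fi P = i}. x P) = d i"
    and zO: "z \<in> interdictions Ar Tr Hr VSrc VSnk (red_cost k) Bd"
  shows "1 \<le> robust_val Ar Tr Hr VSrc VSnk x z"
proof -
  define Z where "Z P = (\<Sum>e\<in>set P. z e P)" for P
  define m where "m P = min (x P) (Z P)" for P
  define mc where "mc (P::'a rarc list) = real (min (fi P) (fj P))" for P
  have znn: "\<forall>e P. 0 \<le> z e P" and zinf: "\<forall>e P. red_cost k e = \<infinity> \<longrightarrow> z e P = 0"
    using zO by (auto simp: interdictions_def)
  have Znn: "0 \<le> Z P" for P unfolding Z_def using znn by (simp add: sum_nonneg)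
  have bud: "(\<Sum>P\<in>SPx. \<Sum>e\<in>set P. cr e * z e P) \<le> Bd" by (rule Omega_cost[OF zO])
  have costc: "mc P * Z P \<le> (\<Sum>e\<in>set P. cr e * z e P)" if P: "P \<in> SPcx" for P
  proof -
    have "mc P * Z P = (\<Sum>e\<in>set P. mc P * z e P)" unfolding Z_def by (simp add: sum_distrib_left)
    also have "\<dots> \<le> (\<Sum>e\<in>set P. cr e * z e P)"
    proof (rule sum_mono)
      fix e assume e: "e \<in> set P"
      then have "e = AIn (fi P) \<or> e = AOut (fj P) \<or> (\<exists>a. e = AOld a)" using SPc_set[OF P] by auto
      then show "mc P * z e P \<le> cr e * z e P"
      proof (elim disjE exE)
        assume "e = AIn (fi P)" then show ?thesis using znn unfolding mc_def by (simp add: mult_right_mono)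
      next
        assume "e = AOut (fj P)" then show ?thesis using znn unfolding mc_def by (simp add: mult_right_mono)
      next
        fix a assume "e = AOld a" then show ?thesis using zinf by simp
      qed
    qed
    finally show ?thesis .
  qed
  have coststar: "(\<Sum>e\<in>set [AStar]. cr e * z e [AStar]) = (real k + 1) * Z [AStar]"
    unfolding Z_def by simp
  note split = sum_split
  have mle: "m P \<le> Z P" "m P \<le> x P" for P unfolding m_def by auto
  have mnn: "0 \<le> m P" if "P \<in> SPx" for P unfolding m_def using that xnn Znn by simp
  have mc_nn: "0 \<le> mc P" for P unfolding mc_def by simp
  have mc_le: "mc P \<le> real k" if "P \<in> SPcx" for P
    using SPc_form(1)[OF that] unfolding mc_def by auto
  have Bx: "Bd = (\<Sum>P\<in>SPcx. mc P * x P)"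
  proof -
    have "(\<Sum>P\<in>SPcx. real (fi P) * x P) = (\<Sum>P\<in>SPcx. mc P * x P)"
    proof (rule sum.cong)
      fix P assume "P \<in> SPcx"
      then show "real (fi P) * x P = mc P * x P" using xdiag unfolding mc_def by (cases "x P = 0") auto
    qed simp
    then show ?thesis using budget_eq[OF Fi] by simp
  qed
  have "(\<Sum>P\<in>SPcx. mc P * m P) + (real k + 1) * m [AStar]
        \<le> (\<Sum>P\<in>SPcx. \<Sum>e\<in>set P. cr e * z e P) + (\<Sum>e\<in>set [AStar]. cr e * z e [AStar])"
  proof (rule add_mono)
    show "(\<Sum>P\<in>SPcx. mc P * m P) \<le> (\<Sum>P\<in>SPcx. \<Sum>e\<in>set P. cr e * z e P)"
    proof (rule sum_mono)
      fix P assume P: "P \<in> SPcx"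
      have "mc P * m P \<le> mc P * Z P" using mle mc_nn by (simp add: mult_left_mono)
      then show "mc P * m P \<le> (\<Sum>e\<in>set P. cr e * z e P)" using costc[OF P] by simp
    qed
    show "(real k + 1) * m [AStar] \<le> (\<Sum>e\<in>set [AStar]. cr e * z e [AStar])"
      unfolding coststar using mle by (simp add: mult_left_mono)
  qed
  also have "\<dots> \<le> Bd" using bud split[of "\<lambda>P. \<Sum>e\<in>set P. cr e * z e P"] by simp
  finally have b1: "(\<Sum>P\<in>SPcx. mc P * m P) + (real k + 1) * m [AStar] \<le> (\<Sum>P\<in>SPcx. mc P * x P)"
    using Bx by simp
  define D where "D = (\<Sum>P\<in>SPcx. x P - m P)"
  have Dnn: "0 \<le> D" unfolding D_def using mle by (simp add: sum_nonneg)
  have "(real k + 1) * m [AStar] \<le> (\<Sum>P\<in>SPcx. mc P * (x P - m P))"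
    using b1 by (simp add: right_diff_distrib sum_subtractf)
  also have "\<dots> \<le> (\<Sum>P\<in>SPcx. real k * (x P - m P))"
  proof (rule sum_mono)
    fix P assume "P \<in> SPcx"
    then show "mc P * (x P - m P) \<le> real k * (x P - m P)" using mc_le mle by (simp add: mult_right_mono)
  qed
  also have "\<dots> = real k * D" unfolding D_def by (simp add: sum_distrib_left)
  also have "\<dots> \<le> (real k + 1) * D" using Dnn by (simp add: mult_right_mono)
  finally have "m [AStar] \<le> D" by simp
  have "robust_val Ar Tr Hr VSrc VSnk x z = (\<Sum>P\<in>SPx. x P - m P)"
    unfolding robust_val_def m_def Z_def by (simp add: max_min)
  also have "\<dots> = (x [AStar] - m [AStar]) + D" unfolding D_def by (rule split)
  finally show ?thesis using \<open>m [AStar] \<le> D\<close> xstar by simp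
qed

lemma profit_one:
  assumes xnn: "\<forall>P\<in>SPx. 0 \<le> x P" and xstar: "x [AStar] = 1"
    and xdiag: "\<forall>P\<in>SPcx. x P \<noteq> 0 \<longrightarrow> fi P = fj P"
    and Fi: "\<forall>i\<in>{1..k}. (\<Sum>P\<in>{P\<in>SPcx. fi P = i}. x P) = d i"
  shows "robust_profit Ar Tr Hr VSrc VSnk (red_cost k) Bd x = 1"
proof -
  define z0 where "z0 e P = (if P \<in> SPcx \<and> e = AIn (fi P) then x P else 0)" for e :: "'a rarc" and P
  have c1: "(\<Sum>e\<in>set P. cr e * z0 e P) = real (fi P) * x P" if P: "P \<in> SPcx" for P
  proof -
    have "(\<Sum>e\<in>set P. cr e * z0 e P) = (\<Sum>e\<in>set P. if e = AIn (fi P) then cr e * x P else 0)"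
      using P by (intro sum.cong) (simp_all add: z0_def)
    also have "\<dots> = cr (AIn (fi P)) * x P" using SPc_set[OF P] by (simp add: sum.delta')
    finally show ?thesis by simp
  qed
  have c2: "(\<Sum>e\<in>set [AStar]. cr e * z0 e [AStar]) = 0" using SPx_split by (simp add: z0_def)
  have cost: "(\<Sum>P\<in>SPx. \<Sum>e\<in>set P. cr e * z0 e P) \<le> Bd"
    unfolding sum_split c2 using c1 budget_eq[OF Fi] by simp
  have z0O: "z0 \<in> interdictions Ar Tr Hr VSrc VSnk (red_cost k) Bd"
  proof (rule in_Omega)
    show "\<forall>e P. 0 \<le> z0 e P" using xnn by (simp add: z0_def)
    show "\<forall>a P. z0 (AOld a) P = 0" by (simp add: z0_def)
  qed (rule cost)
  have v0: "robust_val Ar Tr Hr VSrc VSnk x z0 = 1"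
  proof -
    have "\<And>P. P \<in> SPcx \<Longrightarrow> max 0 (x P - (\<Sum>e\<in>set P. z0 e P)) = 0"
    proof -
      fix P assume P: "P \<in> SPcx"
      have "(\<Sum>e\<in>set P. z0 e P) = x P"
        using SPc_set[OF P] P by (simp add: z0_def sum.delta' cong: if_cong)
      then show "max 0 (x P - (\<Sum>e\<in>set P. z0 e P)) = 0" by simp
    qed
    moreover have "(\<Sum>e\<in>set [AStar]. z0 e [AStar]) = 0" using SPx_split by (simp add: z0_def)
    ultimately show ?thesis unfolding robust_val_def sum_split using xstar by simp
  qed
  have low: "\<forall>z\<in>interdictions Ar Tr Hr VSrc VSnk (red_cost k) Bd. 1 \<le> robust_val Ar Tr Hr VSrc VSnk x z"
    using val_lower[OF xnn xstar xdiag Fi] by blast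
  have bdd: "bdd_below ((\<lambda>z. robust_val Ar Tr Hr VSrc VSnk x z) ` interdictions Ar Tr Hr VSrc VSnk (red_cost k) Bd)"
    using low by (intro bdd_belowI[of _ 1]) auto
  have "robust_profit Ar Tr Hr VSrc VSnk (red_cost k) Bd x \<le> 1"
    unfolding robust_profit_def using cINF_lower[OF bdd z0O] v0 by simp
  moreover have "1 \<le> robust_profit Ar Tr Hr VSrc VSnk (red_cost k) Bd x"
    unfolding robust_profit_def using z0O low by (intro cINF_greatest) auto
  ultimately show ?thesis by simp
qed

end

context
  fixes V :: "'v set" and A :: "'a set" and tailf headf :: "'a \<Rightarrow> 'v"
    and u :: "'a \<Rightarrow> real" and k :: nat and src snk :: "nat \<Rightarrow> 'v" and d :: "nat \<Rightarrow> real"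
  assumes fV: "finite V" and fA: "finite A"
    and ends: "\<forall>e\<in>A. tailf e \<in> V \<and> headf e \<in> V"
    and u0: "\<forall>e\<in>A. 0 \<le> u e"
    and sd: "\<forall>i\<in>{1..k}. src i \<in> V \<and> snk i \<in> V \<and> 0 \<le> d i"
begin

abbreviation "SPy \<equiv> SP A k tailf headf src snk"
abbreviation "SPcy \<equiv> SPy - {[AStar]}"

lemma d0: "\<forall>i\<in>{1..k}. 0 \<le> d i" using sd by blast

lemma red_arcs_cases:
  "e \<in> red_arcs A k \<Longrightarrow> (\<exists>a\<in>A. e = AOld a) \<or> (\<exists>i\<in>{1..k}. e = AIn i) \<or> (\<exists>i\<in>{1..k}. e = AOut i) \<or> e = AStar"
  by (auto simp: red_arcs_def)

lemma forward:
  assumes "mc_flow_feasible V A tailf headf u k src snk d"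
  shows "\<exists>x\<in>path_flows (red_arcs A k) (red_tail tailf src snk) (red_head headf src snk)
                    VSrc VSnk (red_cap u d).
       robust_profit (red_arcs A k) (red_tail tailf src snk) (red_head headf src snk)
         VSrc VSnk (red_cost k) (red_budget k d) x = 1"
proof -
  obtain f where f1: "\<forall>i\<in>{1..k}. \<forall>e\<in>A. 0 \<le> f i e" and f2: "\<forall>e\<in>A. (\<Sum>i=1..k. f i e) \<le> u e"
    and f3: "\<forall>i\<in>{1..k}. \<forall>v\<in>V.
            (\<Sum>e\<in>{e\<in>A. tailf e = v}. f i e) - (\<Sum>e\<in>{e\<in>A. headf e = v}. f i e)
              = (if v = src i then d i else 0) - (if v = snk i then d i else 0)"
    using assms unfolding mc_flow_feasible_def by blast
  have ex: "\<forall>i\<in>{1..k}. \<exists>w. (\<forall>p. 0 \<le> w p) \<and> (\<Sum>p\<in>SPD A tailf headf (src i) (snk i). w p) = d i \<and>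
             (\<forall>e\<in>A. (\<Sum>p\<in>{p\<in>SPD A tailf headf (src i) (snk i). e \<in> set p}. w p) \<le> f i e)"
  proof
    fix i assume i: "i \<in> {1..k}"
    show "\<exists>w. (\<forall>p. 0 \<le> w p) \<and> (\<Sum>p\<in>SPD A tailf headf (src i) (snk i). w p) = d i \<and>
             (\<forall>e\<in>A. (\<Sum>p\<in>{p\<in>SPD A tailf headf (src i) (snk i). e \<in> set p}. w p) \<le> f i e)"
    proof (rule decomp[OF fA fV ends])
      show "src i \<in> V" "snk i \<in> V" "0 \<le> d i" using i sd by auto
      show "\<forall>e\<in>A. 0 \<le> f i e" using i f1 by blast
      show "\<forall>v\<in>V. (\<Sum>e\<in>{e\<in>A. tailf e = v}. f i e) - (\<Sum>e\<in>{e\<in>A. headf e = v}. f i e)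
              = (if v = src i then d i else 0) - (if v = snk i then d i else 0)" using i f3 by blast
    qed
  qed
  obtain W where W: "\<forall>i\<in>{1..k}. (\<forall>p. 0 \<le> W i p) \<and> (\<Sum>p\<in>SPD A tailf headf (src i) (snk i). W i p) = d i \<and>
             (\<forall>e\<in>A. (\<Sum>p\<in>{p\<in>SPD A tailf headf (src i) (snk i). e \<in> set p}. W i p) \<le> f i e)"
    using bchoice[OF ex] by blast
  define x where "x P = (if P = [AStar] then 1 else if fi P = fj P then W (fi P) (inner P) else 0)" for P
  have xnn: "\<forall>P\<in>SPy. 0 \<le> x P"
  proof
    fix P assume P: "P \<in> SPy"
    show "0 \<le> x P"
    proof (cases "P = [AStar]")
      case False
      then have "fi P \<in> {1..k}" using SPc_form(1) P by blast
      then show ?thesis using W False by (simp add: x_def)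
    qed (simp add: x_def)
  qed
  have xstar: "x [AStar] = 1" by (simp add: x_def)
  have xdiag: "\<forall>P\<in>SPcy. x P \<noteq> 0 \<longrightarrow> fi P = fj P" by (auto simp: x_def)
  have fin: "finite SPcy" using fSPcx[OF fA d0] .
  have hi: "(\<Sum>P\<in>{P\<in>SPcy. fi P = i \<and> Q (inner P)}. x P) = (\<Sum>p\<in>{p\<in>SPD A tailf headf (src i) (snk i). Q p}. W i p)"
    if i: "i \<in> {1..k}" for i Q
  proof -
    have "(\<Sum>P\<in>{P\<in>SPcy. fi P = i \<and> Q (inner P)}. x P) = (\<Sum>P\<in>{P\<in>SPcy. fi P = i \<and> Q (inner P)}. if fj P = i then W i (inner P) else 0)"
      by (rule sum.cong) (auto simp: x_def)
    also have "\<dots> = (\<Sum>P\<in>{P\<in>{P\<in>SPcy. fi P = i \<and> Q (inner P)}. fj P = i}. W i (inner P))"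
      by (rule sum.inter_filter[symmetric]) (use fin in simp)
    also have "{P\<in>{P\<in>SPcy. fi P = i \<and> Q (inner P)}. fj P = i} = {P\<in>SPcy. fi P = i \<and> fj P = i \<and> Q (inner P)}"
      by auto
    also have "(\<Sum>P\<in>{P\<in>SPcy. fi P = i \<and> fj P = i \<and> Q (inner P)}. W i (inner P)) = (\<Sum>p\<in>{p\<in>SPD A tailf headf (src i) (snk i). Q p}. W i p)"
      by (rule reindex_SPc[OF i])
    finally show ?thesis .
  qed
  have hj: "(\<Sum>P\<in>{P\<in>SPcy. fj P = i}. x P) = (\<Sum>p\<in>SPD A tailf headf (src i) (snk i). W i p)"
    if i: "i \<in> {1..k}" for i
  proof -
    have "(\<Sum>P\<in>{P\<in>SPcy. fj P = i}. x P) = (\<Sum>P\<in>{P\<in>SPcy. fj P = i}. if fi P = i then W i (inner P) else 0)"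
      by (rule sum.cong) (auto simp: x_def)
    also have "\<dots> = (\<Sum>P\<in>{P\<in>{P\<in>SPcy. fj P = i}. fi P = i}. W i (inner P))"
      by (rule sum.inter_filter[symmetric]) (use fin in simp)
    also have "{P\<in>{P\<in>SPcy. fj P = i}. fi P = i} = {P\<in>SPcy. fi P = i \<and> fj P = i \<and> (\<lambda>_. True) (inner P)}"
      by auto
    also have "(\<Sum>P\<in>{P\<in>SPcy. fi P = i \<and> fj P = i \<and> (\<lambda>_. True) (inner P)}. W i (inner P)) = (\<Sum>p\<in>{p\<in>SPD A tailf headf (src i) (snk i). (\<lambda>_. True) p}. W i p)"
      by (rule reindex_SPc[OF i])
    finally show ?thesis by simp
  qed
  have Fi: "\<forall>i\<in>{1..k}. (\<Sum>P\<in>{P\<in>SPcy. fi P = i}. x P) = d i"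
  proof
    fix i assume i: "i \<in> {1..k}"
    have "(\<Sum>P\<in>{P\<in>SPcy. fi P = i}. x P) = (\<Sum>P\<in>{P\<in>SPcy. fi P = i \<and> (\<lambda>_. True) (inner P)}. x P)" by simp
    also have "\<dots> = (\<Sum>p\<in>{p\<in>SPD A tailf headf (src i) (snk i). (\<lambda>_. True) p}. W i p)" by (rule hi[OF i])
    also have "\<dots> = d i" using W i by simp
    finally show "(\<Sum>P\<in>{P\<in>SPcy. fi P = i}. x P) = d i" .
  qed
  have Fj: "\<forall>i\<in>{1..k}. (\<Sum>P\<in>{P\<in>SPcy. fj P = i}. x P) = d i" using hj W by simp
  have Fa: "(\<Sum>P\<in>{P\<in>SPcy. a \<in> set (inner P)}. x P) \<le> u a" if a: "a \<in> A" for a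
  proof -
    have fin2: "finite {P\<in>SPcy. a \<in> set (inner P)}" using fin by simp
    have "{P\<in>{P\<in>SPcy. a \<in> set (inner P)}. fi P \<in> {1..k}} = {P\<in>SPcy. a \<in> set (inner P)}"
      using SPc_form(1) by blast
    then have "(\<Sum>P\<in>{P\<in>SPcy. a \<in> set (inner P)}. x P) = (\<Sum>i\<in>{1..k}. \<Sum>P\<in>{P\<in>{P\<in>SPcy. a \<in> set (inner P)}. fi P = i}. x P)"
      using sum_group_by[OF _ fin2, where S="{1..k}" and g=fi and f=x] by simp
    also have "\<dots> = (\<Sum>i\<in>{1..k}. \<Sum>p\<in>{p\<in>SPD A tailf headf (src i) (snk i). a \<in> set p}. W i p)"
    proof (rule sum.cong)
      fix i assume i: "i \<in> {1..k}"
      have "{P\<in>{P\<in>SPcy. a \<in> set (inner P)}. fi P = i} = {P\<in>SPcy. fi P = i \<and> (\<lambda>p. a \<in> set p) (inner P)}" by auto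
      then show "(\<Sum>P\<in>{P\<in>{P\<in>SPcy. a \<in> set (inner P)}. fi P = i}. x P) = (\<Sum>p\<in>{p\<in>SPD A tailf headf (src i) (snk i). a \<in> set p}. W i p)"
        using hi[OF i, of "\<lambda>p. a \<in> set p"] by simp
    qed simp
    also have "\<dots> \<le> (\<Sum>i\<in>{1..k}. f i a)" by (rule sum_mono) (use W a in auto)
    also have "\<dots> \<le> u a" using f2 a by simp
    finally show ?thesis .
  qed
  have "x \<in> path_flows (red_arcs A k) (red_tail tailf src snk) (red_head headf src snk) VSrc VSnk (red_cap u d)"
    unfolding path_flows_def
  proof (intro CollectI conjI ballI)
    fix P assume "P \<in> SPy" then show "0 \<le> x P" using xnn by blast
  next
    fix e assume e: "e \<in> red_arcs A k"
    show "(\<Sum>P\<in>{P\<in>SPy. e \<in> set P}. x P) \<le> red_cap u d e"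
      using red_arcs_cases[OF e]
    proof (elim disjE bexE)
      fix a assume "a \<in> A" "e = AOld a" then show ?thesis using Fa by (simp add: SP_AOld)
    next
      fix i assume "i \<in> {1..k}" "e = AIn i" then show ?thesis using Fi by (simp add: SP_AIn)
    next
      fix i assume "i \<in> {1..k}" "e = AOut i" then show ?thesis using Fj by (simp add: SP_AOut)
    next
      assume "e = AStar" then show ?thesis using xstar by (simp add: SP_AStar)
    qed
  qed
  moreover have "robust_profit (red_arcs A k) (red_tail tailf src snk) (red_head headf src snk)
         VSrc VSnk (red_cost k) (red_budget k d) x = 1"
    by (rule profit_one[OF fA d0 xnn xstar xdiag Fi])
  ultimately show ?thesis by blast
qed

end

lemma flow_out:
  assumes fA: "finite A" and fS: "finite S" and sub: "\<forall>P\<in>S. set (inner P) \<subseteq> A"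
  shows "(\<Sum>e\<in>{e\<in>A. Pr e}. \<Sum>P\<in>S. if e \<in> set (inner P) then x P else 0)
       = (\<Sum>P\<in>S. x P * (\<Sum>e\<in>set (inner P). if Pr e then 1 else (0::real)))"
proof -
  have "(\<Sum>e\<in>{e\<in>A. Pr e}. \<Sum>P\<in>S. if e \<in> set (inner P) then x P else 0)
      = (\<Sum>P\<in>S. \<Sum>e\<in>{e\<in>A. Pr e}. if e \<in> set (inner P) then x P else 0)" by (rule sum.swap)
  also have "\<dots> = (\<Sum>P\<in>S. x P * (\<Sum>e\<in>{e\<in>A. Pr e}. if e \<in> set (inner P) then 1 else 0))"
    by (rule sum.cong) (simp_all add: sum_distrib_left if_distrib cong: if_cong)
  also have "\<dots> = (\<Sum>P\<in>S. x P * (\<Sum>e\<in>set (inner P). if Pr e then 1 else (0::real)))"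
    by (rule sum.cong) (use count_eq[OF fA] sub in auto)
  finally show ?thesis .
qed

context
  fixes V :: "'v set" and A :: "'a set" and tailf headf :: "'a \<Rightarrow> 'v"
    and u :: "'a \<Rightarrow> real" and k :: nat and src snk :: "nat \<Rightarrow> 'v" and d :: "nat \<Rightarrow> real"
  assumes fV: "finite V" and fA: "finite A"
    and ends: "\<forall>e\<in>A. tailf e \<in> V \<and> headf e \<in> V"
    and u0: "\<forall>e\<in>A. 0 \<le> u e"
    and sd: "\<forall>i\<in>{1..k}. src i \<in> V \<and> snk i \<in> V \<and> 0 \<le> d i"
begin

abbreviation "SPz \<equiv> SP A k tailf headf src snk"
abbreviation "SPcz \<equiv> SPz - {[AStar]}"
abbreviation "Omz \<equiv> interdictions (red_arcs A k) (red_tail tailf src snk) (red_head headf src snk) VSrc VSnk (red_cost k) (red_budget k d)"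
abbreviation "valz \<equiv> robust_val (red_arcs A k) (red_tail tailf src snk) (red_head headf src snk) VSrc VSnk"
abbreviation crz :: "'a rarc \<Rightarrow> real" where "crz \<equiv> (\<lambda>e. real_of_ereal (red_cost k e))"

lemma dd0: "\<forall>i\<in>{1..k}. 0 \<le> d i" using sd by blast

lemma backward:
  assumes xP: "x \<in> path_flows (red_arcs A k) (red_tail tailf src snk) (red_head headf src snk)
                    VSrc VSnk (red_cap u d)"
    and pr: "robust_profit (red_arcs A k) (red_tail tailf src snk) (red_head headf src snk)
         VSrc VSnk (red_cost k) (red_budget k d) x = 1"
  shows "mc_flow_feasible V A tailf headf u k src snk d"
proof -
  have xnn: "\<forall>P\<in>SPz. 0 \<le> x P" using xP by (simp add: path_flows_def)
  have cap: "\<forall>e\<in>red_arcs A k. (\<Sum>P\<in>{P\<in>SPz. e \<in> set P}. x P) \<le> red_cap u d e"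
    using xP by (simp add: path_flows_def)
  have fin: "finite SPcz" using fSPcx[OF fA dd0] .
  have low: "1 \<le> valz x z" if z: "z \<in> Omz" for z
  proof -
    have bdd: "bdd_below ((\<lambda>z. valz x z) ` Omz)"
      by (rule bdd_belowI[of _ 0]) (auto simp: robust_val_def intro: sum_nonneg)
    show ?thesis using cINF_lower[OF bdd z] pr unfolding robust_profit_def by simp
  qed
  have xs1: "x [AStar] \<le> 1"
  proof -
    have "AStar \<in> red_arcs A k" by (simp add: red_arcs_def)
    then have "(\<Sum>P\<in>{P\<in>SPz. AStar \<in> set P}. x P) \<le> red_cap u d AStar" using cap by blast
    then show ?thesis by (simp add: SP_AStar)
  qed
  have xsnn: "0 \<le> x [AStar]" using xnn AStar_SP by blast
  define F where "F i = (\<Sum>P\<in>{P\<in>SPcz. fi P = i}. x P)" for i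
  have Fle: "F i \<le> d i" if i: "i \<in> {1..k}" for i
  proof -
    have "AIn i \<in> red_arcs A k" using i by (simp add: red_arcs_def)
    then have "(\<Sum>P\<in>{P\<in>SPz. AIn i \<in> set P}. x P) \<le> red_cap u d (AIn i)" using cap by blast
    then show ?thesis by (simp add: SP_AIn F_def)
  qed
  define mc where "mc (P::'a rarc list) = real (min (fi P) (fj P))" for P
  define C where "C = (\<Sum>P\<in>SPcz. mc P * x P)"
  have FB: "(\<Sum>P\<in>SPcz. real (fi P) * x P) = (\<Sum>i\<in>{1..k}. real i * F i)"
  proof -
    have "(\<Sum>P\<in>SPcz. real (fi P) * x P) = (\<Sum>i\<in>{1..k}. \<Sum>P\<in>{P\<in>SPcz. fi P = i}. real (fi P) * x P)"
      by (rule sum_by_fi[OF fA dd0])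
    also have "\<dots> = (\<Sum>i\<in>{1..k}. real i * F i)"
      unfolding F_def by (rule sum.cong) (simp_all add: sum_distrib_left)
    finally show ?thesis .
  qed
  have FBd: "(\<Sum>i\<in>{1..k}. real i * F i) \<le> red_budget k d"
    unfolding red_budget_def by (rule sum_mono) (use Fle in \<open>auto intro: mult_left_mono\<close>)
  have CF: "C \<le> (\<Sum>P\<in>SPcz. real (fi P) * x P)" unfolding C_def
    by (rule sum_mono) (use xnn in \<open>auto simp: mc_def intro: mult_right_mono\<close>)
  have CG: "C \<le> (\<Sum>P\<in>SPcz. real (fj P) * x P)" unfolding C_def
    by (rule sum_mono) (use xnn in \<open>auto simp: mc_def intro: mult_right_mono\<close>)
  have CB: "C \<le> red_budget k d" using CF FB FBd by simp
  define t where "t = min (x [AStar]) ((red_budget k d - C) / (real k + 1))"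
  have tnn: "0 \<le> t" unfolding t_def using xsnn CB by simp
  have tle: "(real k + 1) * t \<le> red_budget k d - C"
  proof -
    have "t \<le> (red_budget k d - C) / (real k + 1)" unfolding t_def by simp
    then show ?thesis by (simp add: field_simps)
  qed
  define ea where "ea (P::'a rarc list) = (if fi P \<le> fj P then AIn (fi P) else (AOut (fj P) :: 'a rarc))" for P
  define z1 where "z1 e P = (if P \<in> SPcz then (if e = ea P then x P else 0)
                            else if P = [AStar] \<and> e = AStar then t else 0)" for e :: "'a rarc" and P
  have ea_in: "ea P \<in> set P" if "P \<in> SPcz" for P
    using SPc_set[OF that] unfolding ea_def by auto
  have cr_ea: "crz (ea P) = mc P" for P unfolding ea_def mc_def by auto
  have c1: "(\<Sum>e\<in>set P. crz e * z1 e P) = mc P * x P" if P: "P \<in> SPcz" for P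
  proof -
    have "(\<Sum>e\<in>set P. crz e * z1 e P) = (\<Sum>e\<in>set P. if e = ea P then crz e * x P else 0)"
      using P by (intro sum.cong) (simp_all add: z1_def)
    also have "\<dots> = crz (ea P) * x P" using ea_in[OF P] by (simp add: sum.delta')
    finally show ?thesis using cr_ea by simp
  qed
  have c2: "(\<Sum>e\<in>set [AStar]. crz e * z1 e [AStar]) = (real k + 1) * t"
    using SPx_split[OF fA dd0] by (simp add: z1_def)
  have z1O: "z1 \<in> Omz"
  proof (rule in_Omega[OF fA dd0])
    show "\<forall>e P. 0 \<le> z1 e P" using xnn tnn by (simp add: z1_def)
    show "\<forall>a P. z1 (AOld a) P = 0" by (simp add: z1_def ea_def)
    have "(\<Sum>P\<in>SPz. \<Sum>e\<in>set P. crz e * z1 e P) = (real k + 1) * t + C"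
      unfolding sum_split[OF fA dd0] c2 C_def using c1 by simp
    then show "(\<Sum>P\<in>SPz. \<Sum>e\<in>set P. crz e * z1 e P) \<le> red_budget k d" using tle by simp
  qed
  have v1: "valz x z1 = max 0 (x [AStar] - t)"
  proof -
    have "\<And>P. P \<in> SPcz \<Longrightarrow> max 0 (x P - (\<Sum>e\<in>set P. z1 e P)) = 0"
    proof -
      fix P assume P: "P \<in> SPcz"
      have "(\<Sum>e\<in>set P. z1 e P) = x P"
        using ea_in[OF P] P by (simp add: z1_def sum.delta' cong: if_cong)
      then show "max 0 (x P - (\<Sum>e\<in>set P. z1 e P)) = 0" by simp
    qed
    moreover have "(\<Sum>e\<in>set [AStar]. z1 e [AStar]) = t" using SPx_split[OF fA dd0] by (simp add: z1_def)
    ultimately show ?thesis unfolding robust_val_def sum_split[OF fA dd0] by simp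
  qed
  have "1 \<le> max 0 (x [AStar] - t)" using low[OF z1O] v1 by simp
  then have xs: "x [AStar] = 1" and t0: "t = 0" using xs1 tnn by auto
  have "(red_budget k d - C) / (real k + 1) \<le> 0"
  proof (rule ccontr)
    assume "\<not> (red_budget k d - C) / (real k + 1) \<le> 0"
    then have "0 < t" unfolding t_def using xs by simp
    then show False using t0 by simp
  qed
  then have BC: "red_budget k d \<le> C" by (simp add: divide_le_0_iff)
  have zi: "\<forall>P\<in>SPcz. (real (fi P) - mc P) * x P = 0"
  proof -
    have "(\<Sum>P\<in>SPcz. (real (fi P) - mc P) * x P) = (\<Sum>P\<in>SPcz. real (fi P) * x P) - C"
      unfolding C_def by (simp add: left_diff_distrib sum_subtractf)
    also have "\<dots> \<le> 0" using FB FBd BC by simp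
    finally have le: "(\<Sum>P\<in>SPcz. (real (fi P) - mc P) * x P) \<le> 0" .
    have nn: "\<forall>P\<in>SPcz. 0 \<le> (real (fi P) - mc P) * x P" using xnn by (auto simp: mc_def)
    have s0: "(\<Sum>P\<in>SPcz. (real (fi P) - mc P) * x P) = 0"
      by (rule antisym[OF le sum_nonneg]) (use nn in blast)
    have "(\<Sum>P\<in>SPcz. (real (fi P) - mc P) * x P) = 0 \<longleftrightarrow> (\<forall>P\<in>SPcz. (real (fi P) - mc P) * x P = 0)"
      by (rule sum_nonneg_eq_0_iff[OF fin]) (use nn in blast)
    then show ?thesis using s0 by blast
  qed
  have zj: "\<forall>P\<in>SPcz. (real (fj P) - mc P) * x P = 0"
  proof -
    have GB: "(\<Sum>P\<in>SPcz. real (fj P) * x P) \<le> red_budget k d"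
    proof -
      define G where "G i = (\<Sum>P\<in>{P\<in>SPcz. fj P = i}. x P)" for i
      have Gle: "G i \<le> d i" if i: "i \<in> {1..k}" for i
      proof -
        have "AOut i \<in> red_arcs A k" using i by (simp add: red_arcs_def)
        then have "(\<Sum>P\<in>{P\<in>SPz. AOut i \<in> set P}. x P) \<le> red_cap u d (AOut i)" using cap by blast
        then show ?thesis by (simp add: SP_AOut G_def)
      qed
      have "(\<Sum>P\<in>SPcz. real (fj P) * x P) = (\<Sum>i\<in>{1..k}. \<Sum>P\<in>{P\<in>SPcz. fj P = i}. real (fj P) * x P)"
        by (rule sum_by_fj[OF fA dd0])
      also have "\<dots> = (\<Sum>i\<in>{1..k}. real i * G i)"
        unfolding G_def by (rule sum.cong) (simp_all add: sum_distrib_left)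
      also have "\<dots> \<le> red_budget k d"
        unfolding red_budget_def by (rule sum_mono) (use Gle in \<open>auto intro: mult_left_mono\<close>)
      finally show ?thesis .
    qed
    have "(\<Sum>P\<in>SPcz. (real (fj P) - mc P) * x P) = (\<Sum>P\<in>SPcz. real (fj P) * x P) - C"
      unfolding C_def by (simp add: left_diff_distrib sum_subtractf)
    also have "\<dots> \<le> 0" using GB BC by simp
    finally have le: "(\<Sum>P\<in>SPcz. (real (fj P) - mc P) * x P) \<le> 0" .
    have nn: "\<forall>P\<in>SPcz. 0 \<le> (real (fj P) - mc P) * x P" using xnn by (auto simp: mc_def)
    have s0: "(\<Sum>P\<in>SPcz. (real (fj P) - mc P) * x P) = 0"
      by (rule antisym[OF le sum_nonneg]) (use nn in blast)
    have "(\<Sum>P\<in>SPcz. (real (fj P) - mc P) * x P) = 0 \<longleftrightarrow> (\<forall>P\<in>SPcz. (real (fj P) - mc P) * x P = 0)"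
      by (rule sum_nonneg_eq_0_iff[OF fin]) (use nn in blast)
    then show ?thesis using s0 by blast
  qed
  have xdiag: "\<forall>P\<in>SPcz. x P \<noteq> 0 \<longrightarrow> fi P = fj P"
  proof (intro ballI impI)
    fix P assume P: "P \<in> SPcz" and "x P \<noteq> 0"
    then have "real (fi P) = mc P" "real (fj P) = mc P" using zi zj by auto
    then show "fi P = fj P" by simp
  qed
  have Feq: "F i = d i" if i: "i \<in> {1..k}" for i
  proof -
    have "(\<Sum>i\<in>{1..k}. real i * (d i - F i)) = red_budget k d - (\<Sum>i\<in>{1..k}. real i * F i)"
      unfolding red_budget_def by (simp add: right_diff_distrib sum_subtractf)
    also have "\<dots> \<le> 0" using FB CF BC by simp
    finally have le: "(\<Sum>i\<in>{1..k}. real i * (d i - F i)) \<le> 0" .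
    have nn: "\<forall>i\<in>{1..k}. 0 \<le> real i * (d i - F i)" using Fle by simp
    have s0: "(\<Sum>i\<in>{1..k}. real i * (d i - F i)) = 0"
      by (rule antisym[OF le sum_nonneg]) (use nn in blast)
    have "(\<Sum>i\<in>{1..k}. real i * (d i - F i)) = 0 \<longleftrightarrow> (\<forall>i\<in>{1..k}. real i * (d i - F i) = 0)"
      by (rule sum_nonneg_eq_0_iff) (use nn in auto)
    then have "real i * (d i - F i) = 0" using s0 i by blast
    then show ?thesis using i by simp
  qed
  define S where "S i = {P\<in>SPcz. fi P = i \<and> fj P = i}" for i
  have finS: "finite (S i)" for i unfolding S_def using fin by simp
  have SF: "(\<Sum>P\<in>S i. x P) = d i" if i: "i \<in> {1..k}" for i
  proof -
    have "F i = (\<Sum>P\<in>{P\<in>SPcz. fi P = i}. if fj P = i then x P else 0)"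
      unfolding F_def by (rule sum.cong) (use xdiag in auto)
    also have "\<dots> = (\<Sum>P\<in>{P\<in>{P\<in>SPcz. fi P = i}. fj P = i}. x P)"
      by (rule sum.inter_filter[symmetric]) (use fin in simp)
    also have "{P\<in>{P\<in>SPcz. fi P = i}. fj P = i} = S i" unfolding S_def by auto
    finally show ?thesis using Feq[OF i] by simp
  qed
  define f where "f i a = (\<Sum>P\<in>S i. if a \<in> set (inner P) then x P else 0)" for i a
  have SPDi: "inner P \<in> SPD A tailf headf (src i) (snk i)" if "P \<in> S i" for P i
  proof -
    have P: "P \<in> SPcz" "fi P = i" "fj P = i" using that by (auto simp: S_def)
    have "inner P \<in> SPD A tailf headf (src (fi P)) (snk (fj P))" by (rule SPc_form(4)[OF P(1)])
    then show ?thesis using P by simp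
  qed
  have innerA: "\<forall>P\<in>S i. set (inner P) \<subseteq> A" for i
    using SPDi by (auto simp: SPD_def)
  have f1: "\<forall>i\<in>{1..k}. \<forall>e\<in>A. 0 \<le> f i e"
    unfolding f_def S_def using xnn by (auto intro!: sum_nonneg)
  have f2: "\<forall>e\<in>A. (\<Sum>i=1..k. f i e) \<le> u e"
  proof
    fix a assume a: "a \<in> A"
    define g where "g P = (if a \<in> set (inner P) then x P else 0)" for P
    define SD where "SD = {P\<in>SPcz. fi P = fj P}"
    have finSD: "finite SD" unfolding SD_def using fin by simp
    have SSD: "S i = {P\<in>SD. fi P = i}" for i unfolding S_def SD_def by auto
    have "(\<Sum>i=1..k. f i a) = (\<Sum>i\<in>{1..k}. \<Sum>P\<in>{P\<in>SD. fi P = i}. g P)"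
      unfolding f_def g_def SSD by simp
    also have "\<dots> = (\<Sum>P\<in>{P\<in>SD. fi P \<in> {1..k}}. g P)"
      by (rule sum_group_by) (use finSD in auto)
    also have "\<dots> \<le> (\<Sum>P\<in>SPcz. g P)"
      by (rule sum_mono2[OF fin]) (use xnn in \<open>auto simp: SD_def g_def\<close>)
    also have "\<dots> = (\<Sum>P\<in>{P\<in>SPcz. a \<in> set (inner P)}. x P)"
      unfolding g_def by (rule sum.inter_filter[symmetric, OF fin])
    also have "\<dots> = (\<Sum>P\<in>{P\<in>SPz. AOld a \<in> set P}. x P)" by (simp add: SP_AOld)
    also have "\<dots> \<le> u a"
    proof -
      have "AOld a \<in> red_arcs A k" using a by (simp add: red_arcs_def)
      then have "(\<Sum>P\<in>{P\<in>SPz. AOld a \<in> set P}. x P) \<le> red_cap u d (AOld a)" using cap by blast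
      then show ?thesis by simp
    qed
    finally show "(\<Sum>i=1..k. f i a) \<le> u a" .
  qed
  have f3: "\<forall>i\<in>{1..k}. \<forall>v\<in>V.
            (\<Sum>e\<in>{e\<in>A. tailf e = v}. f i e) - (\<Sum>e\<in>{e\<in>A. headf e = v}. f i e)
              = (if v = src i then d i else 0) - (if v = snk i then d i else 0)"
  proof (intro ballI)
    fix i v assume i: "i \<in> {1..k}" and v: "v \<in> V"
    have "(\<Sum>e\<in>{e\<in>A. tailf e = v}. f i e) - (\<Sum>e\<in>{e\<in>A. headf e = v}. f i e)
        = (\<Sum>P\<in>S i. x P * ((\<Sum>e\<in>set (inner P). if tailf e = v then 1 else 0) - (\<Sum>e\<in>set (inner P). if headf e = v then 1 else 0)))"
      unfolding f_def flow_out[OF fA finS innerA] by (simp add: right_diff_distrib sum_subtractf)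
    also have "\<dots> = (\<Sum>P\<in>S i. x P * ((if v = src i then 1 else 0) - (if v = snk i then 1 else 0)))"
    proof (rule sum.cong)
      fix P assume P: "P \<in> S i"
      then have "inner P \<in> SPD A tailf headf (src i) (snk i)" by (rule SPDi)
      then have "walk tailf headf (inner P) (src i) (snk i)" "distinct (src i # map headf (inner P))"
        by (auto simp: SPD_def)
      from walk_cons_conserv[OF this, of v]
      show "x P * ((\<Sum>e\<in>set (inner P). if tailf e = v then 1 else 0) - (\<Sum>e\<in>set (inner P). if headf e = v then 1 else 0))
           = x P * ((if v = src i then 1 else 0) - (if v = snk i then 1 else 0))" by simp
    qed simp
    also have "\<dots> = (\<Sum>P\<in>S i. x P) * ((if v = src i then 1 else 0) - (if v = snk i then 1 else 0))"
      by (simp add: sum_distrib_right)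
    also have "\<dots> = (if v = src i then d i else 0) - (if v = snk i then d i else 0)"
      using SF[OF i] by simp
    finally show "(\<Sum>e\<in>{e\<in>A. tailf e = v}. f i e) - (\<Sum>e\<in>{e\<in>A. headf e = v}. f i e)
              = (if v = src i then d i else 0) - (if v = snk i then d i else 0)" .
  qed
  show ?thesis unfolding mc_flow_feasible_def using f1 f2 f3 by blast
qed

end

theorem lemma2:
  fixes V :: "'v set" and A :: "'a set" and tailf headf :: "'a \<Rightarrow> 'v"
    and u :: "'a \<Rightarrow> real" and k :: nat and src snk :: "nat \<Rightarrow> 'v" and d :: "nat \<Rightarrow> real"
  assumes "finite V" and "finite A"
    and "\<forall>e\<in>A. tailf e \<in> V \<and> headf e \<in> V"
    and "\<forall>e\<in>A. 0 \<le> u e"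
    and "\<forall>i\<in>{1..k}. src i \<in> V \<and> snk i \<in> V \<and> 0 \<le> d i"
  shows "mc_flow_feasible V A tailf headf u k src snk d \<longleftrightarrow>
    (\<exists>x\<in>path_flows (red_arcs A k) (red_tail tailf src snk) (red_head headf src snk)
                    VSrc VSnk (red_cap u d).
       robust_profit (red_arcs A k) (red_tail tailf src snk) (red_head headf src snk)
         VSrc VSnk (red_cost k) (red_budget k d) x = 1)"
proof
  assume "mc_flow_feasible V A tailf headf u k src snk d"
  then show "\<exists>x\<in>path_flows (red_arcs A k) (red_tail tailf src snk) (red_head headf src snk)
                    VSrc VSnk (red_cap u d).
       robust_profit (red_arcs A k) (red_tail tailf src snk) (red_head headf src snk)
         VSrc VSnk (red_cost k) (red_budget k d) x = 1"
    by (rule forward[OF assms])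
next
  assume "\<exists>x\<in>path_flows (red_arcs A k) (red_tail tailf src snk) (red_head headf src snk)
                    VSrc VSnk (red_cap u d).
       robust_profit (red_arcs A k) (red_tail tailf src snk) (red_head headf src snk)
         VSrc VSnk (red_cost k) (red_budget k d) x = 1"
  then obtain x where x: "x \<in> path_flows (red_arcs A k) (red_tail tailf src snk) (red_head headf src snk)
                    VSrc VSnk (red_cap u d)"
    "robust_profit (red_arcs A k) (red_tail tailf src snk) (red_head headf src snk)
         VSrc VSnk (red_cost k) (red_budget k d) x = 1" by blast
  show "mc_flow_feasible V A tailf headf u k src snk d"
    by (rule backward[OF assms x])
qed

end
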